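(* Let $\Omega\subset\mathbb{R}^2$ be open, $\lambda>0$, and let $u\in L^2(\Omega)$ satisfy $-\Delta u=\lambda u$ in $\Omega$. Let $\mathbf{x}_0\in\Omega$, $h>0$, $\alpha\in(0,1)$, and let $\mathbf{e}^-,\mathbf{e}^+$ be unit vectors with angle $\alpha\pi$ from $\mathbf{e}^-$ to $\mathbf{e}^+$; put $\Gamma^\pm=\{\mathbf{x}_0+t\mathbf{e}^\pm:0\le t\le h\}\subset\Omega$. Suppose $\Gamma^+$ is a singular line of $u$ ($\partial_\nu u=0$ on $\Gamma^+$) and $\Gamma^-$ is a generalized singular line of $u$ with constant parameter $\eta_1\equiv C_1\neq0$. Let $n\in\mathbb{N}$, $n\ge3$. If $u(\mathbf{x}_0)=0$ and $\alpha\neq q/p$ for all integers $1\le q<p\le n-1$, then $u$ vanishes up to the order $n$ at $\mathbf{x}_0$, i.e. all partial derivatives of $u$ of order at most $n-1$ vanish at $\mathbf{x}_0$.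
   Context: No boundary condition is imposed on $\partial\Omega$; $u$ is real-analytic in $\Omega$. $\nu$ denotes a unit normal to the segment in question. A generalized singular line with parameter $\eta$ is a segment on which $\partial_\nu u+\eta u=0$. "Vanishes up to order $n$" means every homogeneous term of degree $<n$ in the Taylor expansion of $u$ at $\mathbf{x}_0$ vanishes. *)

theory Defs
  imports "HOL-Analysis.Analysis"
begin

definition dirderiv :: "real^2 \<Rightarrow> (real^2 \<Rightarrow> real) \<Rightarrow> real^2 \<Rightarrow> real" where
  "dirderiv v f x = deriv (\<lambda>t. f (x + t *\<^sub>R v)) 0"

fun iderv :: "(real^2) list \<Rightarrow> (real^2 \<Rightarrow> real) \<Rightarrow> real^2 \<Rightarrow> real" where
  "iderv [] f = f"
| "iderv (v # vs) f = dirderiv v (iderv vs f)"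

definition coord_dirs :: "(real^2) set" where
  "coord_dirs = {axis 1 1, axis 2 1}"

definition smooth_on :: "(real^2) set \<Rightarrow> (real^2 \<Rightarrow> real) \<Rightarrow> bool" where
  "smooth_on S f \<longleftrightarrow> (\<forall>vs. set vs \<subseteq> coord_dirs \<longrightarrow> iderv vs f differentiable_on S)"

definition laplacian :: "(real^2 \<Rightarrow> real) \<Rightarrow> real^2 \<Rightarrow> real" where
  "laplacian f x = iderv [axis 1 1, axis 1 1] f x + iderv [axis 2 1, axis 2 1] f x"

definition rot :: "real \<Rightarrow> real^2 \<Rightarrow> real^2" where
  "rot phi v = vector [cos phi * v$1 - sin phi * v$2, sin phi * v$1 + cos phi * v$2]"

definition seg :: "real^2 \<Rightarrow> real^2 \<Rightarrow> real \<Rightarrow> (real^2) set" where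
  "seg x0 e h = {x0 + t *\<^sub>R e | t. 0 \<le> t \<and> t \<le> h}"

definition vanishes_to_order :: "(real^2 \<Rightarrow> real) \<Rightarrow> real^2 \<Rightarrow> nat \<Rightarrow> bool" where
  "vanishes_to_order f x0 n \<longleftrightarrow>
     (\<forall>vs. set vs \<subseteq> coord_dirs \<longrightarrow> length vs < n \<longrightarrow> iderv vs f x0 = 0)"

end

theory Submission
  imports Defs
begin


abbreviation E1 :: "real^2" where "E1 \<equiv> axis 1 1"
abbreviation E2 :: "real^2" where "E2 \<equiv> axis 2 1"

lemma vec2_decomp: "(v::real^2) = v$1 *\<^sub>R E1 + v$2 *\<^sub>R E2"
  by (simp add: vec_eq_iff forall_2 axis_def)

lemma dd_hasderiv:
  assumes "(g has_derivative D) (at (p + z *\<^sub>R a))"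
  shows "((\<lambda>s. g (p + s *\<^sub>R a)) has_real_derivative D a) (at z)"
proof -
  have l: "((\<lambda>s. p + s *\<^sub>R a) has_derivative (\<lambda>s. s *\<^sub>R a)) (at z)"
    by (auto intro!: derivative_eq_intros)
  have "((g \<circ> (\<lambda>s. p + s *\<^sub>R a)) has_derivative (D \<circ> (\<lambda>s. s *\<^sub>R a))) (at z)"
    using diff_chain_at[OF l assms] by simp
  moreover have "(D \<circ> (\<lambda>s. s *\<^sub>R a)) = (*) (D a)"
    using has_derivative_bounded_linear[OF assms]
    by (auto simp: fun_eq_iff bounded_linear.linear linear_cmul mult.commute)
  ultimately show ?thesis
    by (simp add: has_field_derivative_def o_def)
qed

lemma dd_eq:
  assumes "(g has_derivative D) (at p)"
  shows "dirderiv a g p = D a"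
  unfolding dirderiv_def
  using dd_hasderiv[of g D p 0 a] assms by (simp add: DERIV_imp_deriv)

lemma dd_lin:
  assumes "g differentiable (at p)"
  shows "dirderiv v g p = v$1 * dirderiv E1 g p + v$2 * dirderiv E2 g p"
proof -
  obtain D where D: "(g has_derivative D) (at p)" using assms differentiable_def by blast
  have lin: "linear D" using has_derivative_bounded_linear[OF D] bounded_linear.linear by blast
  have "D v = D (v$1 *\<^sub>R E1 + v$2 *\<^sub>R E2)" using vec2_decomp[of v] by simp
  also have "\<dots> = v$1 * D E1 + v$2 * D E2" using lin by (simp add: linear_add linear_cmul)
  finally show ?thesis using dd_eq[OF D] by simp
qed

lemma dd_comb:
  assumes "f differentiable (at p)" "g differentiable (at p)"
  shows "dirderiv v (\<lambda>y. a * f y + b * g y) p = a * dirderiv v f p + b * dirderiv v g p"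
proof -
  obtain D where D: "(f has_derivative D) (at p)" using assms differentiable_def by blast
  obtain D' where D': "(g has_derivative D') (at p)" using assms differentiable_def by blast
  have "((\<lambda>y. a * f y + b * g y) has_derivative (\<lambda>h. a * D h + b * D' h)) (at p)"
    by (intro has_derivative_add has_derivative_mult_right D D')
  from dd_eq[OF this] dd_eq[OF D] dd_eq[OF D'] show ?thesis by simp
qed

lemma dd_loc:
  assumes "open S" "x \<in> S" "\<forall>y\<in>S. F y = G y"
  shows "dirderiv v F x = dirderiv v G x"
proof -
  have c: "((\<lambda>t. x + t *\<^sub>R v) \<longlongrightarrow> x + 0 *\<^sub>R v) (nhds 0)"
    by (rule tendsto_at_iff_tendsto_nhds[THEN iffD1]) (intro tendsto_intros)
  have "eventually (\<lambda>t. x + t *\<^sub>R v \<in> S) (nhds 0)"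
    using topological_tendstoD[OF c assms(1)] assms(2) by simp
  hence "eventually (\<lambda>t. F (x + t *\<^sub>R v) = G (x + t *\<^sub>R v)) (nhds 0)"
    by (rule eventually_mono) (use assms(3) in auto)
  thus ?thesis unfolding dirderiv_def by (rule deriv_cong_ev) simp
qed

lemma iderv_loc:
  assumes "open S" "x \<in> S" "\<forall>y\<in>S. F y = G y"
  shows "iderv vs F x = iderv vs G x"
  using assms(2)
proof (induction vs arbitrary: x)
  case Nil then show ?case using assms by simp
next
  case (Cons w vs)
  then show ?case using dd_loc[OF assms(1) Cons.prems, of "iderv vs F" "iderv vs G"] by simp
qed

lemma iderv_append: "iderv (vs @ ws) f = iderv vs (iderv ws f)"
  by (induction vs) auto

lemma iderv_comb:
  assumes "open S"
    and P: "\<And>vs x. set vs \<subseteq> A \<Longrightarrow> x \<in> S \<Longrightarrow>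
       iderv vs f differentiable (at x) \<and> iderv vs g differentiable (at x)"
    and "set ws \<subseteq> A" "x \<in> S"
  shows "iderv ws (\<lambda>y. a * f y + b * g y) x = a * iderv ws f x + b * iderv ws g x"
  using assms(3,4)
proof (induction ws arbitrary: x)
  case Nil then show ?case by simp
next
  case (Cons w ws)
  have "iderv (w # ws) (\<lambda>y. a * f y + b * g y) x
      = dirderiv w (\<lambda>y. a * iderv ws f y + b * iderv ws g y) x"
    using dd_loc[OF assms(1) Cons.prems(2), of "iderv ws (\<lambda>y. a * f y + b * g y)"
        "\<lambda>y. a * iderv ws f y + b * iderv ws g y"] Cons by simp
  also have "\<dots> = a * iderv (w # ws) f x + b * iderv (w # ws) g x"
    using dd_comb P[of ws x] Cons.prems by simp
  finally show ?case .
qed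

lemma smooth_diff_at:
  assumes "open S" "smooth_on S f" "set ws \<subseteq> coord_dirs" "x \<in> S"
  shows "iderv ws f differentiable (at x)"
  using assms unfolding smooth_on_def
  by (meson differentiable_on_eq_differentiable_at)

lemma smooth_comb:
  assumes "open S" "smooth_on S f" "smooth_on S g"
  shows "smooth_on S (\<lambda>y. a * f y + b * g y)"
  unfolding smooth_on_def
proof (intro allI impI)
  fix ws assume ws: "set ws \<subseteq> coord_dirs"
  have eq: "\<forall>x\<in>S. iderv ws (\<lambda>y. a * f y + b * g y) x = a * iderv ws f x + b * iderv ws g x"
    using iderv_comb[OF assms(1), of coord_dirs f g ws] smooth_diff_at assms ws by blast
  show "iderv ws (\<lambda>y. a * f y + b * g y) differentiable_on S"
    unfolding differentiable_on_eq_differentiable_at[OF assms(1)]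
  proof
    fix x assume x: "x \<in> S"
    have "(\<lambda>y. a * iderv ws f y + b * iderv ws g y) differentiable (at x)"
      using smooth_diff_at[OF assms(1,2) ws x] smooth_diff_at[OF assms(1,3) ws x]
      by (intro differentiable_add differentiable_mult differentiable_const) auto
    then obtain D where "((\<lambda>y. a * iderv ws f y + b * iderv ws g y) has_derivative D) (at x)"
      using differentiable_def by blast
    then have "(iderv ws (\<lambda>y. a * f y + b * g y) has_derivative D) (at x)"
      by (rule has_derivative_transform_within_open[OF _ assms(1) x]) (use eq in auto)
    then show "iderv ws (\<lambda>y. a * f y + b * g y) differentiable (at x)"
      using differentiable_def by blast
  qed
qed



lemma smooth_cong:
  assumes "open S" "smooth_on S F" "\<forall>y\<in>S. F y = G y"
  shows "smooth_on S G"
  unfolding smooth_on_def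
proof (intro allI impI)
  fix ws assume ws: "set ws \<subseteq> coord_dirs"
  show "iderv ws G differentiable_on S"
    unfolding differentiable_on_eq_differentiable_at[OF assms(1)]
  proof
    fix x assume x: "x \<in> S"
    obtain D where "(iderv ws F has_derivative D) (at x)"
      using smooth_diff_at[OF assms(1,2) ws x] differentiable_def by blast
    then have "(iderv ws G has_derivative D) (at x)"
      by (rule has_derivative_transform_within_open[OF _ assms(1) x])
         (use iderv_loc[OF assms(1) _ assms(3)] in auto)
    then show "iderv ws G differentiable (at x)" using differentiable_def by blast
  qed
qed

lemma smooth_iderv_coord:
  assumes "smooth_on S f" "set ws \<subseteq> coord_dirs"
  shows "smooth_on S (iderv ws f)"
  using assms unfolding smooth_on_def by (simp add: iderv_append[symmetric])

lemma smooth_dd: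
  assumes "open S" "smooth_on S f"
  shows "smooth_on S (dirderiv v f)"
proof -
  have c: "E1 \<in> coord_dirs" "E2 \<in> coord_dirs" by (auto simp: coord_dirs_def)
  have "smooth_on S (\<lambda>y. v$1 * iderv [E1] f y + v$2 * iderv [E2] f y)"
    by (rule smooth_comb[OF assms(1)]; rule smooth_iderv_coord[OF assms(2)]) (use c in auto)
  moreover have "\<forall>y\<in>S. v$1 * iderv [E1] f y + v$2 * iderv [E2] f y = dirderiv v f y"
  proof
    fix y assume y: "y \<in> S"
    have "f differentiable (at y)" using smooth_diff_at[OF assms(1,2), of "[]" y] y by simp
    from dd_lin[OF this, of v] show "v$1 * iderv [E1] f y + v$2 * iderv [E2] f y = dirderiv v f y" by simp
  qed
  ultimately show ?thesis using smooth_cong[OF assms(1)] by blast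
qed

lemma smooth_iderv:
  assumes "open S" "smooth_on S f"
  shows "smooth_on S (iderv vs f)"
proof (induction vs)
  case Nil then show ?case using assms(2) by simp
next
  case (Cons w vs) then show ?case using smooth_dd[OF assms(1) Cons.IH] by simp
qed

lemma diff_iderv:
  assumes "open S" "smooth_on S f" "x \<in> S"
  shows "iderv vs f differentiable (at x)"
proof -
  have "iderv [] (iderv vs f) differentiable (at x)"
    by (rule smooth_diff_at[OF assms(1) smooth_iderv[OF assms(1,2)]]) (use assms(3) in auto)
  then show ?thesis by simp
qed

lemma iderv_comb_gen:
  assumes "open S" "smooth_on S f" "smooth_on S g" "x \<in> S"
  shows "iderv ws (\<lambda>y. a * f y + b * g y) x = a * iderv ws f x + b * iderv ws g x"
  by (rule iderv_comb[OF assms(1), of UNIV]) (use diff_iderv assms in auto)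

lemma iderv_expand:
  assumes "open S" "smooth_on S f" "x \<in> S"
  shows "iderv (pre @ v # post) f x = v$1 * iderv (pre @ E1 # post) f x + v$2 * iderv (pre @ E2 # post) f x"
proof -
  let ?F = "iderv post f"
  have sF: "smooth_on S ?F" by (rule smooth_iderv[OF assms(1,2)])
  have eq: "\<forall>y\<in>S. dirderiv v ?F y = v$1 * iderv [E1] ?F y + v$2 * iderv [E2] ?F y"
  proof
    fix y assume y: "y \<in> S"
    from dd_lin[OF diff_iderv[OF assms(1,2) y], of v post] 
    show "dirderiv v ?F y = v$1 * iderv [E1] ?F y + v$2 * iderv [E2] ?F y" by simp
  qed
  have "iderv (pre @ v # post) f x = iderv pre (dirderiv v ?F) x"
    using iderv_append[of pre "v # post" f] by simp
  also have "\<dots> = iderv pre (\<lambda>y. v$1 * iderv [E1] ?F y + v$2 * iderv [E2] ?F y) x"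
    by (rule iderv_loc[OF assms(1,3) eq])
  also have "\<dots> = v$1 * iderv pre (iderv [E1] ?F) x + v$2 * iderv pre (iderv [E2] ?F) x"
    by (rule iderv_comb_gen[OF assms(1) smooth_iderv[OF assms(1) sF] smooth_iderv[OF assms(1) sF] assms(3)])
  finally show ?thesis using iderv_append[of pre "E1 # post" f] iderv_append[of pre "E2 # post" f] by simp
qed



lemma dd_hasderiv2:
  assumes "g differentiable (at (p + z *\<^sub>R a))"
  shows "((\<lambda>s. g (p + s *\<^sub>R a)) has_real_derivative dirderiv a g (p + z *\<^sub>R a)) (at z)"
proof -
  obtain D where D: "(g has_derivative D) (at (p + z *\<^sub>R a))" using assms differentiable_def by blast
  show ?thesis using dd_hasderiv[OF D] dd_eq[OF D] by simp
qed

lemma second_diff: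
  fixes g :: "real^2 \<Rightarrow> real"
  assumes "open S" "x \<in> S" "\<forall>y\<in>S. g differentiable (at y)"
    and "norm a = 1" "norm b = 1"
    and L: "(dirderiv a g has_derivative L) (at x)" and "\<epsilon> > 0"
  obtains \<delta> where "\<delta> > 0" "\<forall>t. 0 < t \<and> t < \<delta> \<longrightarrow>
      \<bar>g (x + t *\<^sub>R b + t *\<^sub>R a) - g (x + t *\<^sub>R a) - g (x + t *\<^sub>R b) + g x - t^2 * L b\<bar> \<le> \<epsilon> * t^2"
proof -
  let ?G = "dirderiv a g"
  have bl: "bounded_linear L" using L has_derivative_bounded_linear by blast
  hence lin: "linear L" using bounded_linear.linear by blast
  obtain d where d: "d > 0" "\<forall>y. norm (y - x) < d \<longrightarrow> norm (?G y - ?G x - L (y - x)) \<le> (\<epsilon>/3) * norm (y - x)"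
    using L[unfolded has_derivative_at_alt] \<open>\<epsilon> > 0\<close> by (meson divide_pos_pos zero_less_numeral)
  obtain r where r: "r > 0" "ball x r \<subseteq> S" using open_contains_ball assms(1,2) by blast
  define \<delta> where "\<delta> = min d r / 2"
  have "\<delta> > 0" using d r by (simp add: \<delta>_def)
  moreover have "\<forall>t. 0 < t \<and> t < \<delta> \<longrightarrow>
      \<bar>g (x + t *\<^sub>R b + t *\<^sub>R a) - g (x + t *\<^sub>R a) - g (x + t *\<^sub>R b) + g x - t^2 * L b\<bar> \<le> \<epsilon> * t^2"
  proof (intro allI impI)
    fix t assume t: "0 < t \<and> t < \<delta>"
    define \<phi> where "\<phi> = (\<lambda>s. g (x + t *\<^sub>R b + s *\<^sub>R a) - g (x + s *\<^sub>R a))"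
    have inS: "x + t *\<^sub>R b + s *\<^sub>R a \<in> S \<and> x + s *\<^sub>R a \<in> S" if "0 \<le> s" "s \<le> t" for s
    proof -
      have "norm (t *\<^sub>R b + s *\<^sub>R a) \<le> t + s"
        using norm_triangle_ineq[of "t *\<^sub>R b" "s *\<^sub>R a"] assms(4,5) that t by simp
      moreover have "norm (s *\<^sub>R a) \<le> t" using assms(4) that by simp
      ultimately have "dist (x + t *\<^sub>R b + s *\<^sub>R a) x < r" "dist (x + s *\<^sub>R a) x < r"
        using r t that assms(4) unfolding \<delta>_def dist_norm
        by (simp_all add: add.assoc)
      then show ?thesis using r(2) by (auto simp: dist_commute)
    qed
    have der: "(\<phi> has_real_derivative (?G (x + t *\<^sub>R b + s *\<^sub>R a) - ?G (x + s *\<^sub>R a))) (at s)"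
      if "0 \<le> s" "s \<le> t" for s
      unfolding \<phi>_def
      by (intro DERIV_diff dd_hasderiv2) (use inS[OF that] assms(3) in auto)
    have "continuous_on {0..t} \<phi>"
      by (intro continuous_at_imp_continuous_on ballI DERIV_isCont) (use der in auto)
    moreover have "\<And>s. 0 < s \<Longrightarrow> s < t \<Longrightarrow> \<phi> differentiable (at s)"
      using der real_differentiable_def by (meson less_eq_real_def)
    ultimately obtain l z where z: "0 < z" "z < t" "(\<phi> has_real_derivative l) (at z)"
      "\<phi> t - \<phi> 0 = (t - 0) * l"
      using MVT[of 0 t \<phi>] t by blast
    have l: "l = ?G (x + t *\<^sub>R b + z *\<^sub>R a) - ?G (x + z *\<^sub>R a)"
      using DERIV_unique[OF z(3) der[of z]] z by simp
    have n1: "norm (t *\<^sub>R b + z *\<^sub>R a) \<le> 2 * t"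
      using norm_triangle_ineq[of "t *\<^sub>R b" "z *\<^sub>R a"] assms(4,5) z t by simp
    have n2: "norm (z *\<^sub>R a) \<le> t" using assms(4) z by simp
    have e1: "\<bar>?G (x + t *\<^sub>R b + z *\<^sub>R a) - ?G x - L (t *\<^sub>R b + z *\<^sub>R a)\<bar> \<le> (\<epsilon>/3) * (2 * t)"
    proof -
      have "norm (x + t *\<^sub>R b + z *\<^sub>R a - x) < d" using n1 t unfolding \<delta>_def by (simp add: add.assoc)
      hence "\<bar>?G (x + t *\<^sub>R b + z *\<^sub>R a) - ?G x - L (t *\<^sub>R b + z *\<^sub>R a)\<bar> \<le> (\<epsilon>/3) * norm (t *\<^sub>R b + z *\<^sub>R a)"
        using d(2)[rule_format, of "x + t *\<^sub>R b + z *\<^sub>R a"] by (simp add: add.assoc)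
      also have "\<dots> \<le> (\<epsilon>/3) * (2 * t)" using n1 \<open>\<epsilon> > 0\<close> by (intro mult_left_mono) auto
      finally show ?thesis .
    qed
    have e2: "\<bar>?G (x + z *\<^sub>R a) - ?G x - L (z *\<^sub>R a)\<bar> \<le> (\<epsilon>/3) * t"
    proof -
      have "norm (x + z *\<^sub>R a - x) < d" using n2 t unfolding \<delta>_def by simp
      hence "\<bar>?G (x + z *\<^sub>R a) - ?G x - L (z *\<^sub>R a)\<bar> \<le> (\<epsilon>/3) * norm (z *\<^sub>R a)"
        using d(2)[rule_format, of "x + z *\<^sub>R a"] by simp
      also have "\<dots> \<le> (\<epsilon>/3) * t" using n2 \<open>\<epsilon> > 0\<close> by (intro mult_left_mono) auto
      finally show ?thesis .
    qed
    have Lsplit: "L (t *\<^sub>R b + z *\<^sub>R a) = t * L b + z * L a" "L (z *\<^sub>R a) = z * L a"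
      using lin by (simp_all add: linear_add linear_cmul)
    have "\<bar>l - t * L b\<bar> \<le> \<epsilon> * t"
    proof -
      have "\<epsilon> / 3 * (2 * t) = 2 * (\<epsilon> * t / 3)" "\<epsilon> / 3 * t = \<epsilon> * t / 3" by simp_all
      then show ?thesis using e1 e2 unfolding l Lsplit by linarith
    qed
    hence m: "t * \<bar>l - t * L b\<bar> \<le> t * (\<epsilon> * t)" using t by (intro mult_left_mono) auto
    have "\<phi> t - \<phi> 0 = g (x + t *\<^sub>R b + t *\<^sub>R a) - g (x + t *\<^sub>R a) - g (x + t *\<^sub>R b) + g x"
      unfolding \<phi>_def by simp
    hence "g (x + t *\<^sub>R b + t *\<^sub>R a) - g (x + t *\<^sub>R a) - g (x + t *\<^sub>R b) + g x - t^2 * L b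
        = t * (l - t * L b)" using z(4) by (simp add: power2_eq_square algebra_simps)
    moreover have "\<bar>t * (l - t * L b)\<bar> = t * \<bar>l - t * L b\<bar>" using t by (simp add: abs_mult)
    ultimately show "\<bar>g (x + t *\<^sub>R b + t *\<^sub>R a) - g (x + t *\<^sub>R a) - g (x + t *\<^sub>R b) + g x - t^2 * L b\<bar> \<le> \<epsilon> * t^2"
      using m by (simp add: power2_eq_square mult.commute mult.left_commute)
  qed
  ultimately show ?thesis using that by blast
qed



lemma schwarz:
  fixes g :: "real^2 \<Rightarrow> real"
  assumes "open S" "x \<in> S" "\<forall>y\<in>S. g differentiable (at y)" "norm a = 1" "norm b = 1"
    "dirderiv a g differentiable (at x)" "dirderiv b g differentiable (at x)"
  shows "dirderiv b (dirderiv a g) x = dirderiv a (dirderiv b g) x"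
proof -
  obtain La where La: "(dirderiv a g has_derivative La) (at x)" using assms(6) differentiable_def by blast
  obtain Lb where Lb: "(dirderiv b g has_derivative Lb) (at x)" using assms(7) differentiable_def by blast
  have key: "\<bar>La b - Lb a\<bar> \<le> 2 * \<epsilon>" if eps: "\<epsilon> > 0" for \<epsilon>
  proof -
    obtain d1 where d1: "d1 > 0" "\<forall>t. 0 < t \<and> t < d1 \<longrightarrow>
      \<bar>g (x + t *\<^sub>R b + t *\<^sub>R a) - g (x + t *\<^sub>R a) - g (x + t *\<^sub>R b) + g x - t^2 * La b\<bar> \<le> \<epsilon> * t^2"
      using second_diff[OF assms(1-5) La eps] by blast
    obtain d2 where d2: "d2 > 0" "\<forall>t. 0 < t \<and> t < d2 \<longrightarrow>
      \<bar>g (x + t *\<^sub>R a + t *\<^sub>R b) - g (x + t *\<^sub>R b) - g (x + t *\<^sub>R a) + g x - t^2 * Lb a\<bar> \<le> \<epsilon> * t^2"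
      using second_diff[OF assms(1,2,3,5,4) Lb eps] by blast
    define t where "t = min d1 d2 / 2"
    have t: "0 < t" "t < d1" "t < d2" using d1 d2 by (auto simp: t_def)
    have sw: "x + t *\<^sub>R a + t *\<^sub>R b = x + t *\<^sub>R b + t *\<^sub>R a" by (simp add: algebra_simps)
    have "\<bar>t^2 * La b - t^2 * Lb a\<bar> \<le> 2 * \<epsilon> * t^2"
      using d1(2)[rule_format, of t] d2(2)[rule_format, of t] t unfolding sw by linarith
    moreover have "\<bar>t^2 * La b - t^2 * Lb a\<bar> = t^2 * \<bar>La b - Lb a\<bar>"
      by (simp add: right_diff_distrib[symmetric] abs_mult)
    ultimately have "t^2 * \<bar>La b - Lb a\<bar> \<le> t^2 * (2 * \<epsilon>)" by (simp add: mult.commute)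
    thus ?thesis using t by (simp add: mult_le_cancel_left)
  qed
  have "La b = Lb a"
  proof (rule ccontr)
    assume "La b \<noteq> Lb a"
    hence "\<bar>La b - Lb a\<bar> / 4 > 0" by simp
    from key[OF this] show False using \<open>La b \<noteq> Lb a\<close> by simp
  qed
  thus ?thesis using dd_eq[OF La] dd_eq[OF Lb] by simp
qed

lemma norm_E: "norm E1 = 1" "norm E2 = 1" by simp_all

lemma iderv_swap:
  assumes "open S" "smooth_on S f" "x \<in> S" "norm a = 1" "norm b = 1"
  shows "iderv (pre @ a # b # post) f x = iderv (pre @ b # a # post) f x"
proof -
  let ?F = "iderv post f"
  have eq: "\<forall>y\<in>S. iderv [a, b] ?F y = iderv [b, a] ?F y"
  proof
    fix y assume y: "y \<in> S"
    have "dirderiv a (dirderiv b ?F) y = dirderiv b (dirderiv a ?F) y"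
      by (rule schwarz[OF assms(1) y _ assms(5,4)])
         (use diff_iderv[OF assms(1,2)] y in \<open>auto simp del: iderv.simps simp: iderv.simps[symmetric]\<close>)
    then show "iderv [a, b] ?F y = iderv [b, a] ?F y" by simp
  qed
  have "iderv (pre @ a # b # post) f x = iderv pre (iderv [a, b] ?F) x"
    using iderv_append[of pre "[a, b] @ post" f] iderv_append[of "[a,b]" post f] by simp
  also have "\<dots> = iderv pre (iderv [b, a] ?F) x" by (rule iderv_loc[OF assms(1,3) eq])
  also have "\<dots> = iderv (pre @ b # a # post) f x"
    using iderv_append[of pre "[b, a] @ post" f] iderv_append[of "[b,a]" post f] by simp
  finally show ?thesis .
qed



definition cnt :: "(real^2) list \<Rightarrow> nat" where "cnt ws = length (filter (\<lambda>w. w = E1) ws)"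
definition nf :: "(real^2) list \<Rightarrow> (real^2) list" where
  "nf ws = replicate (cnt ws) E1 @ replicate (length ws - cnt ws) E2"

lemma E12: "E1 \<noteq> E2" by (simp add: axis_eq_axis)

lemma move_E2:
  assumes "open S" "smooth_on S f" "x \<in> S"
  shows "iderv (replicate i E1 @ E2 # replicate j E1 @ rest) f x = iderv (replicate (i+j) E1 @ E2 # rest) f x"
proof (induction j arbitrary: i)
  case 0 then show ?case by simp
next
  case (Suc j)
  have "iderv (replicate i E1 @ E2 # replicate (Suc j) E1 @ rest) f x
      = iderv (replicate i E1 @ E2 # E1 # (replicate j E1 @ rest)) f x" by simp
  also have "\<dots> = iderv (replicate i E1 @ E1 # E2 # (replicate j E1 @ rest)) f x"
    by (rule iderv_swap[OF assms]) simp_all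
  also have "\<dots> = iderv (replicate (Suc i) E1 @ E2 # replicate j E1 @ rest) f x"
    by (simp add: replicate_app_Cons_same)
  also have "\<dots> = iderv (replicate (i + Suc j) E1 @ E2 # rest) f x" using Suc.IH[of "Suc i"] by simp
  finally show ?case .
qed

lemma iderv_nf:
  assumes "open S" "smooth_on S f" "set ws \<subseteq> coord_dirs" "x \<in> S"
  shows "iderv ws f x = iderv (nf ws) f x"
  using assms(3,4)
proof (induction ws arbitrary: x)
  case Nil then show ?case by (simp add: nf_def cnt_def)
next
  case (Cons w ws)
  have ws: "set ws \<subseteq> coord_dirs" using Cons.prems by simp
  have "iderv (w # ws) f x = dirderiv w (iderv ws f) x" by simp
  also have "\<dots> = dirderiv w (iderv (nf ws) f) x"
    by (rule dd_loc[OF assms(1) Cons.prems(2)]) (use Cons.IH[OF ws] in blast)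
  also have "\<dots> = iderv (w # nf ws) f x" by simp
  also have "\<dots> = iderv (nf (w # ws)) f x"
  proof -
    have c: "cnt ws \<le> length ws" unfolding cnt_def by (rule length_filter_le)
    have "w = E1 \<or> w = E2" using Cons.prems by (auto simp: coord_dirs_def)
    then show ?thesis
    proof
      assume "w = E1" then show ?thesis by (simp add: nf_def cnt_def)
    next
      assume w: "w = E2"
      have "iderv (w # nf ws) f x = iderv (replicate 0 E1 @ E2 # replicate (cnt ws) E1 @ replicate (length ws - cnt ws) E2) f x"
        using w by (simp add: nf_def)
      also have "\<dots> = iderv (replicate (cnt ws) E1 @ E2 # replicate (length ws - cnt ws) E2) f x"
        using move_E2[OF assms(1,2) Cons.prems(2), of 0 "cnt ws" "replicate (length ws - cnt ws) E2"] by simp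
      also have "\<dots> = iderv (nf (w # ws)) f x"
        using w c E12 by (simp add: nf_def cnt_def Suc_diff_le)
      finally show ?thesis .
    qed
  qed
  finally show ?case .
qed

lemma harm:
  assumes "open S" "smooth_on S u" "x0 \<in> S" "\<forall>x\<in>S. - laplacian u x = lam * u x"
  shows "iderv (ws @ [E1, E1]) u x0 + iderv (ws @ [E2, E2]) u x0 = - lam * iderv ws u x0"
proof -
  have L: "laplacian u = (\<lambda>y. 1 * iderv [E1, E1] u y + 1 * iderv [E2, E2] u y)"
    by (simp add: laplacian_def fun_eq_iff)
  have eq: "\<forall>y\<in>S. laplacian u y = (- lam) * u y + 0 * u y" using assms(4) by force
  have "iderv ws (laplacian u) x0 = iderv ws (\<lambda>y. (- lam) * u y + 0 * u y) x0"
    by (rule iderv_loc[OF assms(1,3) eq])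
  also have "\<dots> = - lam * iderv ws u x0"
    using iderv_comb_gen[OF assms(1,2,2,3), of ws "- lam" 0] by simp
  finally have 1: "iderv ws (laplacian u) x0 = - lam * iderv ws u x0" .
  have "iderv ws (laplacian u) x0 = 1 * iderv ws (iderv [E1, E1] u) x0 + 1 * iderv ws (iderv [E2, E2] u) x0"
    unfolding L by (rule iderv_comb_gen[OF assms(1) smooth_iderv[OF assms(1,2)] smooth_iderv[OF assms(1,2)] assms(3)])
  then show ?thesis using 1 by (simp add: iderv_append)
qed

definition zeta :: "real^2 \<Rightarrow> complex" where "zeta v = Complex (v$2) (v$1)"

lemma zeta_E: "zeta E1 = \<i>" "zeta E2 = 1"
  by (simp_all add: zeta_def axis_def complex_eq_iff)

lemma coord_prod: "set ws \<subseteq> coord_dirs \<Longrightarrow> prod_list (map zeta ws) = \<i> ^ cnt ws"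
  by (induction ws) (auto simp: coord_dirs_def cnt_def zeta_E E12 E12[symmetric])

lemma re_lin: "Re (g * P * (of_real a * \<i> + of_real b) * Q) = a * Re (g * P * \<i> * Q) + b * Re (g * P * Q)"
  by (simp add: algebra_simps)

lemma zeta_lin: "zeta v = of_real (v$1) * \<i> + of_real (v$2)"
  by (simp add: zeta_def complex_eq_iff)

lemma multilin:
  assumes "open S" "smooth_on S u" "x0 \<in> S"
    and H: "\<forall>ws. set ws \<subseteq> coord_dirs \<longrightarrow> length ws = m \<longrightarrow> iderv ws u x0 = Re (\<gamma> * prod_list (map zeta ws))"
    and "length vs = m"
  shows "iderv vs u x0 = Re (\<gamma> * prod_list (map zeta vs))"
proof -
  have "\<forall>post. set post \<subseteq> coord_dirs \<longrightarrow> length pre + length post = m \<longrightarrow>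
      iderv (pre @ post) u x0 = Re (\<gamma> * prod_list (map zeta (pre @ post)))" for pre
  proof (induction pre rule: rev_induct)
    case Nil then show ?case using H by simp
  next
    case (snoc v pre)
    show ?case
    proof (intro allI impI)
      fix post assume p: "set post \<subseteq> coord_dirs" "length (pre @ [v]) + length post = m"
      have c: "E1 \<in> coord_dirs" "E2 \<in> coord_dirs" by (auto simp: coord_dirs_def)
      have h1: "iderv (pre @ E1 # post) u x0 = Re (\<gamma> * prod_list (map zeta (pre @ E1 # post)))"
        using snoc.IH[rule_format, of "E1 # post"] p c by simp
      have h2: "iderv (pre @ E2 # post) u x0 = Re (\<gamma> * prod_list (map zeta (pre @ E2 # post)))"
        using snoc.IH[rule_format, of "E2 # post"] p c by simp
      have "iderv ((pre @ [v]) @ post) u x0 = v$1 * iderv (pre @ E1 # post) u x0 + v$2 * iderv (pre @ E2 # post) u x0"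
        using iderv_expand[OF assms(1,2,3), of pre v post] by simp
      also have "\<dots> = Re (\<gamma> * prod_list (map zeta ((pre @ [v]) @ post)))"
      proof -
        let ?P = "prod_list (map zeta pre)" and ?Q = "prod_list (map zeta post)"
        have pe: "prod_list (map zeta ((pre @ [v]) @ post)) = ?P * (of_real (v$1) * \<i> + of_real (v$2)) * ?Q"
          by (simp add: zeta_lin[of v] mult.assoc del: of_real_mult)
        have p1: "prod_list (map zeta (pre @ E1 # post)) = ?P * \<i> * ?Q" by (simp add: zeta_E mult.assoc)
        have p2: "prod_list (map zeta (pre @ E2 # post)) = ?P * ?Q" by (simp add: zeta_E)
        show ?thesis unfolding h1 h2 pe p1 p2 using re_lin[of \<gamma> ?P "v$1" "v$2" ?Q]
          by (simp only: mult.assoc)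
      qed
      finally show "iderv ((pre @ [v]) @ post) u x0 = Re (\<gamma> * prod_list (map zeta ((pre @ [v]) @ post)))" .
    qed
  qed
  from this[of vs, rule_format, of "[]"] assms(5) show ?thesis by simp
qed

lemma bd:
  assumes "open S" "smooth_on S F" "seg x0 e h \<subseteq> S" "h > 0" "\<forall>y\<in>seg x0 e h. F y = 0"
  shows "iderv (replicate k e) F x0 = 0"
proof -
  have "\<forall>s. 0 \<le> s \<and> s < h \<longrightarrow> iderv (replicate k e) F (x0 + s *\<^sub>R e) = 0"
  proof (induction k)
    case 0
    show ?case
    proof (intro allI impI)
      fix s :: real assume s: "0 \<le> s \<and> s < h"
      have "x0 + s *\<^sub>R e \<in> seg x0 e h" unfolding seg_def using s by auto
      then show "iderv (replicate 0 e) F (x0 + s *\<^sub>R e) = 0" using assms(5) by simp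
    qed
  next
    case (Suc k)
    show ?case
    proof (intro allI impI)
      fix s assume s: "0 \<le> s \<and> s < h"
      let ?G = "iderv (replicate k e) F"
      define y where "y = x0 + s *\<^sub>R e"
      have "y \<in> seg x0 e h" using s unfolding y_def seg_def by auto
      then have yS: "y \<in> S" using assms(3) by auto
      have "((\<lambda>t. ?G (y + t *\<^sub>R e)) has_real_derivative dirderiv e ?G (y + 0 *\<^sub>R e)) (at 0)"
        by (rule dd_hasderiv2) (use diff_iderv[OF assms(1,2) yS] in simp)
      hence "((\<lambda>t. ?G (y + t *\<^sub>R e)) has_real_derivative dirderiv e ?G y) (at 0 within {0<..})"
        by (simp add: has_field_derivative_at_within)
      hence lim: "((\<lambda>t. (?G (y + t *\<^sub>R e) - ?G (y + 0 *\<^sub>R e)) / (t - 0)) \<longlongrightarrow> dirderiv e ?G y) (at_right 0)"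
        by (simp add: has_field_derivative_iff)
      have ev: "eventually (\<lambda>t. (?G (y + t *\<^sub>R e) - ?G (y + 0 *\<^sub>R e)) / (t - 0) = 0) (at_right 0)"
        unfolding eventually_at_right_field
      proof (intro exI[of _ "h - s"] conjI allI impI)
        show "0 < h - s" using s by simp
        fix t :: real assume t: "0 < t" "t < h - s"
        have "y + t *\<^sub>R e = x0 + (s + t) *\<^sub>R e" by (simp add: y_def scaleR_add_left add.assoc)
        then have "?G (y + t *\<^sub>R e) = 0" using Suc.IH s t by simp
        moreover have "?G (y + 0 *\<^sub>R e) = 0" using Suc.IH s unfolding y_def by simp
        ultimately show "(?G (y + t *\<^sub>R e) - ?G (y + 0 *\<^sub>R e)) / (t - 0) = 0" by simp
      qed
      have "((\<lambda>t. (?G (y + t *\<^sub>R e) - ?G (y + 0 *\<^sub>R e)) / (t - 0)) \<longlongrightarrow> 0) (at_right 0)"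
        by (rule tendsto_eventually[OF ev])
      hence "dirderiv e ?G y = 0" using lim tendsto_unique trivial_limit_at_right_real by blast
      then show "iderv (replicate (Suc k) e) F (x0 + s *\<^sub>R e) = 0" unfolding y_def by simp
    qed
  qed
  from this[rule_format, of 0] assms(4) show ?thesis by simp
qed



lemma alg:
  assumes "w \<noteq> 0" "m \<ge> 1"
    and h1: "Re (\<gamma> * w^(m-1) * (cis (-(pi/2)) * w)) = 0"
    and h2: "Re (\<gamma> * (cis (-(\<alpha>*pi)) * w)^(m-1) * (cis (-(pi/2)) * (cis (-(\<alpha>*pi)) * w))) = 0"
    and s: "sin (real m * \<alpha> * pi) \<noteq> 0"
  shows "\<gamma> = 0"
proof -
  define \<delta> where "\<delta> = \<gamma> * cis (-(pi/2)) * w^m"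
  have pm: "z^(m-1) * z = z^m" for z :: complex using assms(2) by (cases m) (simp_all add: power_Suc2)
  have "\<gamma> * w^(m-1) * (cis (-(pi/2)) * w) = \<gamma> * cis (-(pi/2)) * (w^(m-1) * w)" by (simp only: mult_ac)
  also have "\<dots> = \<delta>" unfolding \<delta>_def pm ..
  finally have r1: "Re \<delta> = 0" using h1 by simp
  have "\<gamma> * (cis (-(\<alpha>*pi)) * w)^(m-1) * (cis (-(pi/2)) * (cis (-(\<alpha>*pi)) * w))
      = \<gamma> * cis (-(pi/2)) * ((cis (-(\<alpha>*pi)) * w)^(m-1) * (cis (-(\<alpha>*pi)) * w))" by (simp only: mult_ac)
  also have "\<dots> = \<gamma> * cis (-(pi/2)) * (cis (-(\<alpha>*pi)) ^ m * w ^ m)" unfolding pm by (simp only: power_mult_distrib)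
  also have "\<dots> = \<delta> * cis (real m * (-(\<alpha>*pi)))" using Complex.DeMoivre[of "-(\<alpha>*pi)" m] unfolding \<delta>_def by (simp add: mult_ac)
  finally have "Re (\<delta> * cis (real m * (-(\<alpha>*pi)))) = 0" using h2 by simp
  hence "Re \<delta> * cos (real m * (-(\<alpha>*pi))) - Im \<delta> * sin (real m * (-(\<alpha>*pi))) = 0" by simp
  hence "Im \<delta> * sin (real m * \<alpha> * pi) = 0" using r1 by (simp add: mult.assoc)
  hence "Im \<delta> = 0" using s by simp
  hence "\<delta> = 0" using r1 by (simp add: complex_eq_iff)
  thus ?thesis using assms(1) unfolding \<delta>_def by (simp add: cis_neq_zero)
qed

lemma zeta_rot: "zeta (rot \<phi> v) = cis (-\<phi>) * zeta v"
  by (simp add: zeta_def rot_def complex_eq_iff algebra_simps)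

lemma prod_rep: "prod_list (map zeta (replicate k x @ [y])) = zeta x ^ k * zeta y"
  by (simp add: prod_list_replicate)

lemma cnt_rep: "cnt (replicate j E1 @ replicate k E2 @ xs) = j + cnt xs"
  using E12 by (simp add: cnt_def filter_replicate)

lemma zeta_nz:
  assumes "norm v = 1" shows "zeta v \<noteq> 0"
proof
  assume "zeta v = 0"
  hence "v = 0" by (simp add: zeta_def complex_eq_iff vec_eq_iff forall_2)
  thus False using assms by simp
qed



theorem theorem3p6:
  fixes \<Omega> :: "(real^2) set" and u :: "real^2 \<Rightarrow> real"
    and lam h \<alpha> C1 :: real and x0 em ep :: "real^2" and n :: nat
  assumes "open \<Omega>" and "lam > 0"
    and "smooth_on \<Omega> u"
    and "set_integrable lebesgue \<Omega> (\<lambda>x. (u x)\<^sup>2)"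
    and "\<forall>x\<in>\<Omega>. - laplacian u x = lam * u x"
    and "x0 \<in> \<Omega>" and "h > 0" and "0 < \<alpha>" and "\<alpha> < 1"
    and "norm em = 1" and "ep = rot (\<alpha> * pi) em"
    and "seg x0 ep h \<subseteq> \<Omega>" and "seg x0 em h \<subseteq> \<Omega>"
    and "\<forall>x\<in>seg x0 ep h. dirderiv (rot (pi/2) ep) u x = 0"
    and "C1 \<noteq> 0"
    and "\<forall>x\<in>seg x0 em h. dirderiv (rot (pi/2) em) u x + C1 * u x = 0"
    and "n \<ge> 3"
    and "u x0 = 0"
    and "\<forall>p q :: nat. 1 \<le> q \<longrightarrow> q < p \<longrightarrow> p \<le> n - 1 \<longrightarrow> \<alpha> \<noteq> real q / real p"
  shows "vanishes_to_order u x0 n"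
proof -
  note op = assms(1) and sm = assms(3) and x0 = assms(6)
  have cE: "E1 \<in> coord_dirs" "E2 \<in> coord_dirs" by (auto simp: coord_dirs_def)
  have main: "m < n \<longrightarrow> (\<forall>ws. set ws \<subseteq> coord_dirs \<longrightarrow> length ws = m \<longrightarrow> iderv ws u x0 = 0)" for m
  proof (induction m rule: less_induct)
    case (less m)
    show ?case
    proof (intro impI allI)
      fix ws assume mn: "m < n" and ws: "set ws \<subseteq> coord_dirs" "length ws = m"
      have IH: "\<And>k vs. k < m \<Longrightarrow> set vs \<subseteq> coord_dirs \<Longrightarrow> length vs = k \<Longrightarrow> iderv vs u x0 = 0"
        using less.IH mn by auto
      show "iderv ws u x0 = 0"
      proof (cases "m = 0")
        case True then show ?thesis using ws assms(18) by simp
      next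
        case False
        hence m1: "m \<ge> 1" by simp
        define a where "a j = iderv (replicate j E1 @ replicate (m - j) E2) u x0" for j
        have rec: "a (j + 2) = - a j" if j: "j + 2 \<le> m" for j
        proof -
          define ws0 where "ws0 = replicate j E1 @ replicate (m - 2 - j) E2"
          have h: "iderv (ws0 @ [E1, E1]) u x0 + iderv (ws0 @ [E2, E2]) u x0 = - lam * iderv ws0 u x0"
            by (rule harm[OF op sm x0 assms(5)])
          have "iderv ws0 u x0 = 0"
            by (rule IH[of "m - 2"]) (use j cE in \<open>auto simp: ws0_def\<close>)
          moreover have "iderv (ws0 @ [E1, E1]) u x0 = a (j + 2)"
          proof -
            have "iderv (ws0 @ [E1, E1]) u x0 = iderv (nf (ws0 @ [E1, E1])) u x0"
              by (rule iderv_nf[OF op sm _ x0]) (use cE in \<open>auto simp: ws0_def\<close>)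
            also have "nf (ws0 @ [E1, E1]) = replicate (j + 2) E1 @ replicate (m - (j + 2)) E2"
              using j cnt_rep[of j "m - 2 - j" "[E1, E1]"] unfolding nf_def ws0_def
              by (simp add: cnt_def)
            finally show ?thesis unfolding a_def .
          qed
          moreover have "iderv (ws0 @ [E2, E2]) u x0 = a j"
          proof -
            have "iderv (ws0 @ [E2, E2]) u x0 = iderv (nf (ws0 @ [E2, E2])) u x0"
              by (rule iderv_nf[OF op sm _ x0]) (use cE in \<open>auto simp: ws0_def\<close>)
            also have "nf (ws0 @ [E2, E2]) = replicate j E1 @ replicate (m - j) E2"
              using j cnt_rep[of j "m - 2 - j" "[E2, E2]"] E12 unfolding nf_def ws0_def
              by (simp add: cnt_def replicate_add[symmetric])
            finally show ?thesis unfolding a_def .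
          qed
          ultimately show ?thesis using h by simp
        qed
        define \<gamma> where "\<gamma> = Complex (a 0) (- a 1)"
        have aj: "j \<le> m \<Longrightarrow> a j = Re (\<gamma> * \<i> ^ j)" for j
        proof (induction j rule: less_induct)
          case (less j)
          show ?case
          proof (cases "j < 2")
            case True
            then have "j = 0 \<or> j = 1" by auto
            then show ?thesis by (auto simp: \<gamma>_def)
          next
            case False
            then obtain k where k: "j = k + 2" by (metis add.commute le_Suc_ex not_less)
            have "a j = - a k" using rec[of k] k less.prems by simp
            also have "\<dots> = - Re (\<gamma> * \<i> ^ k)" using less.IH[of k] k less.prems by simp
            also have "\<dots> = Re (\<gamma> * \<i> ^ j)" unfolding k by (simp add: power_add)
            finally show ?thesis .
          qed
        qed
        have coordrep: "\<forall>vs. set vs \<subseteq> coord_dirs \<longrightarrow> length vs = m \<longrightarrow> iderv vs u x0 = Re (\<gamma> * prod_list (map zeta vs))"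
        proof (intro allI impI)
          fix vs assume vs: "set vs \<subseteq> coord_dirs" "length vs = m"
          have c: "cnt vs \<le> m" using vs(2) unfolding cnt_def using length_filter_le by metis
          have "iderv vs u x0 = iderv (nf vs) u x0" by (rule iderv_nf[OF op sm vs(1) x0])
          also have "\<dots> = a (cnt vs)" unfolding a_def nf_def using vs(2) by simp
          also have "\<dots> = Re (\<gamma> * prod_list (map zeta vs))" using aj[OF c] coord_prod[OF vs(1)] by simp
          finally show "iderv vs u x0 = Re (\<gamma> * prod_list (map zeta vs))" .
        qed
        have allrep: "length vs = m \<Longrightarrow> iderv vs u x0 = Re (\<gamma> * prod_list (map zeta vs))" for vs
          by (rule multilin[OF op sm x0 coordrep])
        have lower: "length vs = m - 1 \<Longrightarrow> iderv vs u x0 = 0" for vs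
        proof -
          assume l: "length vs = m - 1"
          have "\<forall>ws. set ws \<subseteq> coord_dirs \<longrightarrow> length ws = m - 1 \<longrightarrow> iderv ws u x0 = Re (0 * prod_list (map zeta ws))"
            using IH[of "m - 1"] m1 by simp
          from multilin[OF op sm x0 this l] show ?thesis by simp
        qed
        define np where "np = rot (pi/2) ep"
        define nm where "nm = rot (pi/2) em"
        have Bp: "iderv (replicate (m - 1) ep @ [np]) u x0 = 0"
        proof -
          have "iderv (replicate (m - 1) ep) (dirderiv np u) x0 = 0"
            by (rule bd[OF op smooth_dd[OF op sm] assms(12,7)]) (use assms(14) in \<open>simp add: np_def\<close>)
          then show ?thesis by (simp add: iderv_append)
        qed
        have Bm: "iderv (replicate (m - 1) em @ [nm]) u x0 = 0"
        proof -
          have "iderv (replicate (m - 1) em) (\<lambda>x. 1 * dirderiv nm u x + C1 * u x) x0 = 0"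
            by (rule bd[OF op smooth_comb[OF op smooth_dd[OF op sm] sm] assms(13,7)])
               (use assms(16) in \<open>simp add: nm_def\<close>)
          moreover have "iderv (replicate (m - 1) em) (\<lambda>x. 1 * dirderiv nm u x + C1 * u x) x0
              = 1 * iderv (replicate (m - 1) em) (dirderiv nm u) x0 + C1 * iderv (replicate (m - 1) em) u x0"
            by (rule iderv_comb_gen[OF op smooth_dd[OF op sm] sm x0])
          moreover have "iderv (replicate (m - 1) em) u x0 = 0" by (rule lower) simp
          ultimately show ?thesis by (simp add: iderv_append)
        qed
        define w where "w = zeta em"
        have wnz: "w \<noteq> 0" unfolding w_def by (rule zeta_nz[OF assms(10)])
        have zp: "zeta ep = cis (-(\<alpha>*pi)) * w" unfolding w_def assms(11) zeta_rot ..
        have znp: "zeta np = cis (-(pi/2)) * (cis (-(\<alpha>*pi)) * w)" unfolding np_def zeta_rot zp ..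
        have znm: "zeta nm = cis (-(pi/2)) * w" unfolding nm_def zeta_rot w_def ..
        have h1: "Re (\<gamma> * w^(m-1) * (cis (-(pi/2)) * w)) = 0"
          using allrep[of "replicate (m - 1) em @ [nm]"] Bm m1 unfolding prod_rep znm w_def by (simp add: mult.assoc)
        have h2: "Re (\<gamma> * (cis (-(\<alpha>*pi)) * w)^(m-1) * (cis (-(pi/2)) * (cis (-(\<alpha>*pi)) * w))) = 0"
          using allrep[of "replicate (m - 1) ep @ [np]"] Bp m1 unfolding prod_rep znp zp by (simp add: mult.assoc)
        have s: "sin (real m * \<alpha> * pi) \<noteq> 0"
        proof
          assume "sin (real m * \<alpha> * pi) = 0"
          then obtain i :: int where i: "real m * \<alpha> * pi = real_of_int i * pi" using sin_zero_iff_int2 by blast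
          hence mi: "real m * \<alpha> = real_of_int i" by simp
          have "real_of_int i > 0" using mi m1 assms(8) by (metis mult_pos_pos of_nat_0_less_iff less_le_trans zero_less_one of_nat_1 le_numeral_extra(3) not_less_zero neq0_conv False)
          moreover have "real_of_int i < real m" using mi assms(9) m1 by (metis mult.right_neutral mult_strict_left_mono of_nat_0_less_iff neq0_conv False)
          ultimately have q: "1 \<le> nat i" "nat i < m" by linarith+
          have "\<alpha> = real (nat i) / real m" using mi q m1 by (simp add: field_simps)
          moreover have "m \<le> n - 1" using mn by simp
          ultimately show False using assms(19) q by blast
        qed
        have "\<gamma> = 0" by (rule alg[OF wnz m1 h1 h2 s])
        then show ?thesis using allrep[of ws] ws by simp
      qed
    qed
  qed
  show ?thesis unfolding vanishes_to_order_def using main by blast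
qed

end
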